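(* Let $K\subset\mathbb R^2$ be a triangle (resp. an axis-parallel rectangle) and let $k\ge 1$. For every $u\in P_k(K)$ (resp. $u\in Q_k(K)$) there exists $\varphi_u\in P_{k+1}(K)$ (resp. $\varphi_u\in Q_{k+1}(K)$) such that, for every edge $e$ of $K$ with unit tangent vector $\bm\tau_e$, the function $(\mathfrak p u-\nabla\varphi_u)\cdot\bm\tau_e$ is constant on $e$.
   Context: $P_i(K)$ denotes the polynomials of total degree at most $i$ on $K$; $Q_{i}(K)$ the polynomials of degree at most $i$ in each of $x_1$ and $x_2$. With $\bm x=(x_1,x_2)^T$ and $\bm x^\perp=(-x_2,x_1)^T$, the Poincaré operator (with origin at $0\in\mathbb R^2$) is $(\mathfrak p u)(\bm x)=\int_0^1 t\,\bm x^\perp\,u(t\bm x)\,dt$, which maps scalar functions to vector fields. *)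

theory Defs
  imports "HOL-Analysis.Analysis"
begin

definition perp :: "real \<times> real \<Rightarrow> real \<times> real" where
  "perp x = (- snd x, fst x)"

definition polyP :: "nat \<Rightarrow> (real \<times> real \<Rightarrow> real) set" where
  "polyP k = {f. \<exists>c :: nat \<Rightarrow> nat \<Rightarrow> real.
      \<forall>x1 x2. f (x1, x2) = (\<Sum>i\<le>k. \<Sum>j\<le>k - i. c i j * x1 ^ i * x2 ^ j)}"

definition polyQ :: "nat \<Rightarrow> (real \<times> real \<Rightarrow> real) set" where
  "polyQ k = {f. \<exists>c :: nat \<Rightarrow> nat \<Rightarrow> real.
      \<forall>x1 x2. f (x1, x2) = (\<Sum>i\<le>k. \<Sum>j\<le>k. c i j * x1 ^ i * x2 ^ j)}"

definition poincare :: "(real \<times> real \<Rightarrow> real) \<Rightarrow> real \<times> real \<Rightarrow> real \<times> real" where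
  "poincare u x = integral {0..1} (\<lambda>t. (t * u (t *\<^sub>R x)) *\<^sub>R perp x)"

definition grad :: "(real \<times> real \<Rightarrow> real) \<Rightarrow> real \<times> real \<Rightarrow> real \<times> real" where
  "grad f x = (frechet_derivative f (at x) (1, 0), frechet_derivative f (at x) (0, 1))"

definition tangential_const_on_edge ::
  "(real \<times> real \<Rightarrow> real \<times> real) \<Rightarrow> real \<times> real \<Rightarrow> real \<times> real \<Rightarrow> bool" where
  "tangential_const_on_edge F p q =
     (\<exists>C. \<forall>x\<in>closed_segment p q. F x \<bullet> ((1 / norm (q - p)) *\<^sub>R (q - p)) = C)"

end

theory Submission
  imports Defs "HOL-Computational_Algebra.Polynomial"
begin


definition mono2 :: "nat \<times> nat \<Rightarrow> real \<times> real \<Rightarrow> real" where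
  "mono2 s x = fst x ^ fst s * snd x ^ snd s"

definition polyS :: "(nat \<times> nat) set \<Rightarrow> (real \<times> real \<Rightarrow> real) set" where
  "polyS S = {f. \<exists>c. \<forall>x. f x = (\<Sum>s\<in>S. c s * mono2 s x)}"

definition idx :: "nat \<Rightarrow> nat \<Rightarrow> nat \<Rightarrow> (nat \<times> nat) set" where
  "idx n m r = {s. fst s \<le> n \<and> snd s \<le> m \<and> fst s + snd s \<le> r}"

abbreviation PQ where "PQ n m r \<equiv> polyS (idx n m r)"

lemma finite_idx[simp]: "finite (idx n m r)"
proof -
  have "idx n m r \<subseteq> {..n} \<times> {..m}" by (auto simp: idx_def)
  thus ?thesis by (rule finite_subset) auto
qed

lemma polyS_zero: "(\<lambda>x. 0) \<in> polyS S"
  unfolding polyS_def by (rule CollectI, rule exI[of _ "\<lambda>_. 0"]) simp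

lemma polyS_add: "f \<in> polyS S \<Longrightarrow> g \<in> polyS S \<Longrightarrow> (\<lambda>x. f x + g x) \<in> polyS S"
proof -
  assume "f \<in> polyS S" "g \<in> polyS S"
  then obtain c d where "\<And>x. f x = (\<Sum>s\<in>S. c s * mono2 s x)" "\<And>x. g x = (\<Sum>s\<in>S. d s * mono2 s x)"
    unfolding polyS_def by blast
  hence "\<forall>x. f x + g x = (\<Sum>s\<in>S. (c s + d s) * mono2 s x)" by (simp add: sum.distrib distrib_right)
  thus ?thesis unfolding polyS_def mem_Collect_eq by (intro exI[of _ "\<lambda>s. c s + d s"])
qed

lemma polyS_scale: "f \<in> polyS S \<Longrightarrow> (\<lambda>x. a * f x) \<in> polyS S"
proof -
  assume "f \<in> polyS S"
  then obtain c where "\<And>x. f x = (\<Sum>s\<in>S. c s * mono2 s x)" unfolding polyS_def by blast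
  hence "\<forall>x. a * f x = (\<Sum>s\<in>S. (a * c s) * mono2 s x)" by (simp add: sum_distrib_left mult.assoc)
  thus ?thesis unfolding polyS_def mem_Collect_eq by (intro exI[of _ "\<lambda>s. a * c s"])
qed

lemma polyS_sum: "finite I \<Longrightarrow> (\<And>i. i \<in> I \<Longrightarrow> f i \<in> polyS S) \<Longrightarrow> (\<lambda>x. \<Sum>i\<in>I. f i x) \<in> polyS S"
  by (induction I rule: finite_induct) (auto intro: polyS_zero polyS_add)

lemma polyS_mono2: "finite S \<Longrightarrow> s \<in> S \<Longrightarrow> mono2 s \<in> polyS S"
proof -
  assume S: "finite S" "s \<in> S"
  have "(\<Sum>t\<in>S. (if t = s then 1 else 0) * mono2 t x) = mono2 s x" for x
  proof -
    have "(\<Sum>t\<in>S. (if t = s then 1 else 0) * mono2 t x) = (\<Sum>t\<in>S. if t = s then mono2 t x else 0)"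
      by (rule sum.cong) auto
    also have "\<dots> = mono2 s x" using S by simp
    finally show ?thesis .
  qed
  hence "\<forall>x. mono2 s x = (\<Sum>t\<in>S. (if t = s then 1 else 0) * mono2 t x)" by simp
  thus ?thesis unfolding polyS_def mem_Collect_eq by (intro exI[of _ "\<lambda>t. if t = s then 1 else 0"])
qed

lemma polyS_subset: "finite T \<Longrightarrow> S \<subseteq> T \<Longrightarrow> f \<in> polyS S \<Longrightarrow> f \<in> polyS T"
proof -
  assume T: "finite T" "S \<subseteq> T" "f \<in> polyS S"
  then obtain c where c: "\<And>x. f x = (\<Sum>s\<in>S. c s * mono2 s x)" unfolding polyS_def by auto
  have fS: "finite S" using T finite_subset by blast
  have "(\<lambda>x. \<Sum>s\<in>S. c s * mono2 s x) \<in> polyS T"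
    by (rule polyS_sum[OF fS]) (rule polyS_scale, rule polyS_mono2, use T in auto)
  moreover have "f = (\<lambda>x. \<Sum>s\<in>S. c s * mono2 s x)" using c by auto
  ultimately show ?thesis by simp
qed

lemma polyS_mult:
  assumes S: "finite S" and T: "finite T" and U: "finite U"
    and ST: "\<And>s t. s \<in> S \<Longrightarrow> t \<in> T \<Longrightarrow> (fst s + fst t, snd s + snd t) \<in> U"
    and f: "f \<in> polyS S" and g: "g \<in> polyS T"
  shows "(\<lambda>x. f x * g x) \<in> polyS U"
proof -
  obtain c where c: "\<And>x. f x = (\<Sum>s\<in>S. c s * mono2 s x)" using f unfolding polyS_def by auto
  obtain d where d: "\<And>x. g x = (\<Sum>s\<in>T. d s * mono2 s x)" using g unfolding polyS_def by auto
  have eq: "(\<lambda>x. f x * g x) = (\<lambda>x. \<Sum>s\<in>S. c s * (\<Sum>t\<in>T. d t * mono2 (fst s + fst t, snd s + snd t) x))"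
  proof (rule ext)
    fix x
    have "f x * g x = (\<Sum>s\<in>S. c s * (mono2 s x * g x))" by (simp add: c sum_distrib_right mult.assoc)
    also have "\<dots> = (\<Sum>s\<in>S. c s * (\<Sum>t\<in>T. d t * mono2 (fst s + fst t, snd s + snd t) x))"
      by (rule sum.cong) (simp_all add: d sum_distrib_left mono2_def power_add mult_ac)
    finally show "f x * g x = (\<Sum>s\<in>S. c s * (\<Sum>t\<in>T. d t * mono2 (fst s + fst t, snd s + snd t) x))" .
  qed
  show ?thesis unfolding eq
    by (intro polyS_sum polyS_scale polyS_mono2 S T U ST)
qed

lemma PQ_mult: "f \<in> PQ n m r \<Longrightarrow> g \<in> PQ n' m' r' \<Longrightarrow> (\<lambda>x. f x * g x) \<in> PQ (n+n') (m+m') (r+r')"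
  by (rule polyS_mult[of "idx n m r" "idx n' m' r'"], simp_all) (auto simp: idx_def)

lemma PQ_mono: "f \<in> PQ n m r \<Longrightarrow> n \<le> n' \<Longrightarrow> m \<le> m' \<Longrightarrow> r \<le> r' \<Longrightarrow> f \<in> PQ n' m' r'"
  by (rule polyS_subset[of _ "idx n m r"], simp) (auto simp: idx_def)

lemma PQ_const: "(\<lambda>x. a) \<in> PQ n m r"
proof -
  have "mono2 (0,0) \<in> PQ n m r" by (rule polyS_mono2, simp) (auto simp: idx_def)
  hence "(\<lambda>x. a * mono2 (0,0) x) \<in> PQ n m r" by (rule polyS_scale)
  thus ?thesis by (simp add: mono2_def)
qed

lemma PQ_fst: "fst \<in> PQ 1 0 1"
proof -
  have "mono2 (1,0) \<in> PQ 1 0 1" by (rule polyS_mono2, simp) (auto simp: idx_def)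
  moreover have "mono2 (1,0) = fst" by (rule ext) (simp add: mono2_def)
  ultimately show ?thesis by simp
qed

lemma PQ_snd: "snd \<in> PQ 0 1 1"
proof -
  have "mono2 (0,1) \<in> PQ 0 1 1" by (rule polyS_mono2, simp) (auto simp: idx_def)
  moreover have "mono2 (0,1) = snd" by (rule ext) (simp add: mono2_def)
  ultimately show ?thesis by simp
qed

lemma PQ_power: "f \<in> PQ n m r \<Longrightarrow> (\<lambda>x. f x ^ i) \<in> PQ (i*n) (i*m) (i*r)"
proof (induction i)
  case 0 then show ?case using PQ_const[of 1] by simp
next
  case (Suc i)
  have "(\<lambda>x. f x * f x ^ i) \<in> PQ (n + i*n) (m + i*m) (r + i*r)"
    by (rule PQ_mult) (use Suc in auto)
  then show ?case by simp
qed

lemma sum_idx_gen: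
  assumes I: "S = Sigma {..k} B" and fin: "\<And>i. finite (B i)"
  shows "(\<Sum>s\<in>S. c s * mono2 s x) = (\<Sum>i\<le>k. \<Sum>j\<in>B i. c (i,j) * fst x^i * snd x^j)"
proof -
  have "(\<Sum>i\<le>k. \<Sum>j\<in>B i. c (i,j) * mono2 (i,j) x) = (\<Sum>(i,j)\<in>Sigma {..k} B. c (i,j) * mono2 (i,j) x)"
    by (rule sum.Sigma) (auto simp: fin)
  also have "\<dots> = (\<Sum>s\<in>S. c s * mono2 s x)" unfolding I by (simp add: case_prod_beta')
  finally show ?thesis by (simp add: mono2_def mult.assoc)
qed

lemma poly_eq_gen:
  assumes I: "S = Sigma {..k} B" and fin: "\<And>i. finite (B i)"
  shows "{f. \<exists>c :: nat \<Rightarrow> nat \<Rightarrow> real. \<forall>x1 x2. f (x1, x2) = (\<Sum>i\<le>k. \<Sum>j\<in>B i. c i j * x1 ^ i * x2 ^ j)} = polyS S"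
proof
  note E = sum_idx_gen[OF I fin]
  show "{f. \<exists>c :: nat \<Rightarrow> nat \<Rightarrow> real. \<forall>x1 x2. f (x1, x2) = (\<Sum>i\<le>k. \<Sum>j\<in>B i. c i j * x1 ^ i * x2 ^ j)} \<subseteq> polyS S"
  proof
    fix f assume "f \<in> {f. \<exists>c :: nat \<Rightarrow> nat \<Rightarrow> real. \<forall>x1 x2. f (x1, x2) = (\<Sum>i\<le>k. \<Sum>j\<in>B i. c i j * x1 ^ i * x2 ^ j)}"
    then obtain c where c: "\<And>x1 x2. f (x1,x2) = (\<Sum>i\<le>k. \<Sum>j\<in>B i. c i j * x1 ^ i * x2 ^ j)" by blast
    have "\<forall>x. f x = (\<Sum>s\<in>S. c (fst s) (snd s) * mono2 s x)"
    proof
      fix x :: "real \<times> real"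
      have "f x = f (fst x, snd x)" by simp
      also have "\<dots> = (\<Sum>s\<in>S. c (fst s) (snd s) * mono2 s x)" unfolding c E by simp
      finally show "f x = (\<Sum>s\<in>S. c (fst s) (snd s) * mono2 s x)" .
    qed
    thus "f \<in> polyS S" unfolding polyS_def mem_Collect_eq by (intro exI[of _ "\<lambda>s. c (fst s) (snd s)"])
  qed
  show "polyS S \<subseteq> {f. \<exists>c :: nat \<Rightarrow> nat \<Rightarrow> real. \<forall>x1 x2. f (x1, x2) = (\<Sum>i\<le>k. \<Sum>j\<in>B i. c i j * x1 ^ i * x2 ^ j)}"
  proof
    fix f assume "f \<in> polyS S"
    then obtain c where c: "\<And>x. f x = (\<Sum>s\<in>S. c s * mono2 s x)" unfolding polyS_def by blast
    have "\<forall>x1 x2. f (x1, x2) = (\<Sum>i\<le>k. \<Sum>j\<in>B i. c (i,j) * x1 ^ i * x2 ^ j)"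
      by (simp add: c E)
    thus "f \<in> {f. \<exists>c :: nat \<Rightarrow> nat \<Rightarrow> real. \<forall>x1 x2. f (x1, x2) = (\<Sum>i\<le>k. \<Sum>j\<in>B i. c i j * x1 ^ i * x2 ^ j)}"
      unfolding mem_Collect_eq by (intro exI[of _ "\<lambda>i j. c (i,j)"])
  qed
qed

lemma polyP_eq: "polyP k = PQ k k k"
  unfolding polyP_def by (rule poly_eq_gen) (auto simp: idx_def)

lemma polyQ_eq: "polyQ k = PQ k k (2*k)"
  unfolding polyQ_def by (rule poly_eq_gen) (auto simp: idx_def)



lemma mono_diff: "(\<lambda>x::real\<times>real. fst x ^ a * snd x ^ b) differentiable (at x)"
  by (intro differentiable_mult differentiable_power bounded_linear_imp_differentiable bounded_linear_fst bounded_linear_snd)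

lemma polyS_differentiable: "f \<in> polyS S \<Longrightarrow> finite S \<Longrightarrow> f differentiable (at x)"
proof -
  assume "f \<in> polyS S" and that: "finite S"
  then obtain c where c: "\<And>x. f x = (\<Sum>s\<in>S. c s * mono2 s x)" unfolding polyS_def by blast
  have "f = (\<lambda>x. \<Sum>s\<in>S. c s * (fst x ^ fst s * snd x ^ snd s))" by (rule ext) (simp add: c mono2_def)
  moreover have "(\<lambda>x. \<Sum>s\<in>S. c s * (fst x ^ fst s * snd x ^ snd s)) differentiable (at x)"
    using that by (intro differentiable_sum differentiable_mult differentiable_const mono_diff ballI)
  ultimately show ?thesis by simp
qed

lemma has_integral_pow01: "((\<lambda>t::real. t ^ n) has_integral (1 / real (Suc n))) {0..1}"
proof -
  have d: "((\<lambda>t. t ^ Suc n / real (Suc n)) has_real_derivative t ^ n) (at t within {0..1})" for t :: real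
  proof -
    have "((\<lambda>t. t ^ Suc n / real (Suc n)) has_real_derivative (real (Suc n) * t ^ n / real (Suc n))) (at t within {0..1})"
      by (intro derivative_eq_intros) auto
    thus ?thesis by simp
  qed
  have "((\<lambda>t::real. t ^ n) has_integral ((\<lambda>t. t ^ Suc n / real (Suc n)) 1 - (\<lambda>t. t ^ Suc n / real (Suc n)) 0)) {0..1}"
    apply (rule fundamental_theorem_of_calculus)
     apply simp
    using d unfolding has_real_derivative_iff_has_vector_derivative by blast
  thus ?thesis by simp
qed

lemma poincare_poly:
  assumes u: "u \<in> polyS S" and S: "finite S"
  shows "\<exists>G\<in>polyS S. \<forall>x. poincare u x = G x *\<^sub>R perp x"
proof -
  obtain c where c: "\<And>x. u x = (\<Sum>s\<in>S. c s * mono2 s x)" using u unfolding polyS_def by blast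
  define G where "G x = (\<Sum>s\<in>S. (c s / real (fst s + snd s + 2)) * mono2 s x)" for x
  have GS: "G \<in> polyS S" unfolding polyS_def G_def mem_Collect_eq
    by (rule exI[of _ "\<lambda>s. c s / real (fst s + snd s + 2)"]) simp
  have int: "((\<lambda>t. t * u (t *\<^sub>R x)) has_integral G x) {0..1}" for x
  proof -
    have eq: "(\<lambda>t. t * u (t *\<^sub>R x)) = (\<lambda>t. \<Sum>s\<in>S. (c s * mono2 s x) * t ^ (fst s + snd s + 1))"
      by (rule ext) (simp add: c mono2_def sum_distrib_left power_add power_mult_distrib mult_ac)
    have "((\<lambda>t. \<Sum>s\<in>S. (c s * mono2 s x) * t ^ (fst s + snd s + 1)) has_integral
          (\<Sum>s\<in>S. (c s * mono2 s x) * (1 / real (Suc (fst s + snd s + 1))))) {0..1}"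
      by (intro has_integral_sum S has_integral_mult_right has_integral_pow01)
    moreover have "(\<Sum>s\<in>S. (c s * mono2 s x) * (1 / real (Suc (fst s + snd s + 1)))) = G x"
      unfolding G_def by (rule sum.cong) auto
    ultimately show ?thesis unfolding eq by simp
  qed
  have "poincare u x = G x *\<^sub>R perp x" for x
  proof -
    have "((\<lambda>t. (t * u (t *\<^sub>R x)) *\<^sub>R perp x) has_integral (G x *\<^sub>R perp x)) {0..1}"
      by (rule has_integral_scaleR_left[OF int])
    thus ?thesis unfolding poincare_def by (rule integral_unique)
  qed
  thus ?thesis using GS by blast
qed

lemma restrict_line:
  assumes f: "f \<in> polyS S" and S: "finite S"
    and deg: "\<And>s. s \<in> S \<Longrightarrow> (if fst v = 0 then 0 else fst s) + (if snd v = 0 then 0 else snd s) \<le> N"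
  shows "\<exists>a. \<forall>t. f (p + t *\<^sub>R v) = (\<Sum>j\<le>N. a j * t ^ j)"
proof -
  obtain c where c: "\<And>x. f x = (\<Sum>s\<in>S. c s * mono2 s x)" using f unfolding polyS_def by blast
  define P where "P = (\<Sum>s\<in>S. smult (c s) ([:fst p, fst v:] ^ fst s * [:snd p, snd v:] ^ snd s))"
  have d1: "degree [:a, b:] \<le> (if b = 0 then 0 else 1)" for a b :: real by auto
  have degP: "degree P \<le> N" unfolding P_def
  proof (rule degree_sum_le[OF S])
    fix s assume s: "s \<in> S"
    have "degree (smult (c s) ([:fst p, fst v:] ^ fst s * [:snd p, snd v:] ^ snd s))
       \<le> degree ([:fst p, fst v:] ^ fst s) + degree ([:snd p, snd v:] ^ snd s)"
      using degree_smult_le degree_mult_le order_trans by blast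
    also have "\<dots> \<le> degree [:fst p, fst v:] * fst s + degree [:snd p, snd v:] * snd s"
      by (intro add_mono degree_power_le)
    also have "\<dots> \<le> (if fst v = 0 then 0 else 1) * fst s + (if snd v = 0 then 0 else 1) * snd s"
      by (intro add_mono mult_right_mono d1) auto
    also have "\<dots> \<le> N" using deg[OF s] by (auto split: if_splits)
    finally show "degree (smult (c s) ([:fst p, fst v:] ^ fst s * [:snd p, snd v:] ^ snd s)) \<le> N" .
  qed
  have "f (p + t *\<^sub>R v) = poly P t" for t
    by (simp add: c P_def poly_sum mono2_def algebra_simps)
  moreover have "poly P t = (\<Sum>j\<le>N. coeff P j * t ^ j)" for t
  proof -
    have "poly P t = (\<Sum>j\<le>degree P. coeff P j * t ^ j)" by (rule poly_altdef)
    also have "\<dots> = (\<Sum>j\<le>N. coeff P j * t ^ j)"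
      by (rule sum.mono_neutral_left) (use degP in \<open>auto simp: coeff_eq_0\<close>)
    finally show ?thesis .
  qed
  ultimately show ?thesis by metis
qed



lemma core:
  assumes diff: "\<And>x. \<phi> differentiable (at x)"
    and line: "\<And>s. \<phi> (p + s *\<^sub>R (q - p)) = h s"
    and der: "\<And>s. (h has_real_derivative (d * G (p + s *\<^sub>R (q - p)) + Cc)) (at s)"
    and dd: "d = perp p \<bullet> (q - p)"
    and pc: "\<And>x. poincare u x = G x *\<^sub>R perp x"
  shows "tangential_const_on_edge (\<lambda>x. poincare u x - grad \<phi> x) p q"
  unfolding tangential_const_on_edge_def
proof (rule exI[of _ "- Cc / norm (q - p)"], intro ballI)
  fix x assume "x \<in> closed_segment p q"
  then obtain s where "x = (1 - s) *\<^sub>R p + s *\<^sub>R q" unfolding closed_segment_def by blast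
  hence xs: "x = p + s *\<^sub>R (q - p)" by (simp add: algebra_simps)
  define v where "v = q - p"
  define D where "D = frechet_derivative \<phi> (at x)"
  have hD: "(\<phi> has_derivative D) (at x)" unfolding D_def using diff frechet_derivative_works by blast
  have lin: "linear D" using hD has_derivative_linear by blast
  have g: "((\<lambda>t. p + t *\<^sub>R v) has_derivative (\<lambda>t. t *\<^sub>R v)) (at s)"
    by (intro derivative_eq_intros) auto
  have "((\<phi> \<circ> (\<lambda>t. p + t *\<^sub>R v)) has_derivative (D \<circ> (\<lambda>t. t *\<^sub>R v))) (at s)"
    by (rule diff_chain_at[OF g]) (use hD xs v_def in simp)
  moreover have "(D \<circ> (\<lambda>t. t *\<^sub>R v)) = (*) (D v)"
    by (rule ext) (simp add: linear_scale[OF lin])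
  moreover have "\<phi> \<circ> (\<lambda>t. p + t *\<^sub>R v) = h" by (rule ext) (simp add: line v_def)
  ultimately have "(h has_real_derivative D v) (at s)" by (simp add: has_field_derivative_def)
  with der have Dv: "D v = d * G x + Cc" using DERIV_unique xs v_def by metis
  have "v = fst v *\<^sub>R (1,0) + snd v *\<^sub>R (0,1)" by (cases v) simp
  hence "D v = fst v * D (1,0) + snd v * D (0,1)"
    by (metis linear_add[OF lin] linear_scale[OF lin] real_scaleR_def)
  hence gr: "grad \<phi> x \<bullet> v = d * G x + Cc" using Dv
    by (simp add: grad_def D_def inner_prod_def mult.commute)
  have pv: "perp x \<bullet> v = d" unfolding dd xs v_def
    by (simp add: perp_def inner_prod_def algebra_simps)
  have "(poincare u x - grad \<phi> x) \<bullet> v = - Cc"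
    by (simp add: pc inner_diff_left pv gr)
  thus "(poincare u x - grad \<phi> x) \<bullet> ((1 / norm (q - p)) *\<^sub>R (q - p)) = - Cc / norm (q - p)"
    by (simp add: v_def)
qed

definition edgeF :: "nat \<Rightarrow> (nat \<Rightarrow> real) \<Rightarrow> real \<Rightarrow> (real \<times> real \<Rightarrow> real) \<Rightarrow> (real \<times> real \<Rightarrow> real)
    \<Rightarrow> (real \<times> real \<Rightarrow> real) \<Rightarrow> real \<times> real \<Rightarrow> real" where
  "edgeF k a d L M N x = - d * L x * M x * N x * (\<Sum>j\<le>k. a j / real (Suc j) * (\<Sum>i<j. M x ^ i))"

lemma edgeF_line:
  assumes "L x = 1 - s" "M x = s" "N x = 1"
  shows "edgeF k a d L M N x = d * (\<Sum>j\<le>k. a j / real (Suc j) * (s ^ Suc j - s))"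
proof -
  have "(1 - s) * s * (\<Sum>i<j. s ^ i) = s - s ^ Suc j" for j
  proof -
    have e: "(1 - s) * (\<Sum>i<j. s ^ i) = 1 - s ^ j" by (rule one_diff_power_eq[symmetric])
    have "(1 - s) * s * (\<Sum>i<j. s ^ i) = s * ((1 - s) * (\<Sum>i<j. s ^ i))" by (simp add: mult_ac)
    also have "\<dots> = s * (1 - s ^ j)" by (simp add: e)
    also have "\<dots> = s - s ^ Suc j" by (simp add: algebra_simps)
    finally show ?thesis .
  qed
  hence "- d * (1 - s) * s * (a j / real (Suc j) * (\<Sum>i<j. s ^ i)) = d * (a j / real (Suc j) * (s ^ Suc j - s))" for j
    by (metis (no_types, lifting) minus_diff_eq mult.assoc mult.left_commute mult_minus_left mult_minus_right)
  thus ?thesis unfolding edgeF_def assms by (simp add: sum_distrib_left)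
qed

lemma edgeF_zero: "L x = 0 \<or> M x = 0 \<or> N x = 0 \<Longrightarrow> edgeF k a d L M N x = 0"
  unfolding edgeF_def by auto

lemma hderiv:
  "((\<lambda>s. d * (\<Sum>j\<le>k. a j / real (Suc j) * (s ^ Suc j - s))) has_real_derivative
     (d * (\<Sum>j\<le>k. a j * s ^ j) + (- d * (\<Sum>j\<le>k. a j / real (Suc j))))) (at s)"
proof -
  have e: "(\<Sum>j\<le>k. a j / real (Suc j) * (real (Suc j) * s ^ j - 1)) = (\<Sum>j\<le>k. a j * s ^ j) - (\<Sum>j\<le>k. a j / real (Suc j))"
  proof -
    have "(\<Sum>j\<le>k. a j / real (Suc j) * (real (Suc j) * s ^ j - 1)) = (\<Sum>j\<le>k. a j * s ^ j - a j / real (Suc j))"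
      by (rule sum.cong) (auto simp: field_simps)
    thus ?thesis by (simp add: sum_subtractf)
  qed
  have "((\<lambda>s. d * (\<Sum>j\<le>k. a j / real (Suc j) * (s ^ Suc j - s))) has_real_derivative
     (d * (\<Sum>j\<le>k. a j / real (Suc j) * (real (Suc j) * s ^ j - 1)))) (at s)"
  proof -
    have pw: "((\<lambda>s. s ^ Suc j) has_real_derivative real (Suc j) * s ^ j) (at s)" for j
      using DERIV_pow[of "Suc j" s] by simp
    show ?thesis by (intro DERIV_cmult DERIV_sum DERIV_diff pw DERIV_ident)
  qed
  thus ?thesis unfolding e by (simp add: algebra_simps)
qed

lemma edgeF_mem:
  assumes L: "L \<in> PQ a b r" and M: "M \<in> PQ a b r" and N: "N \<in> PQ a' b' r'"
    and ar: "\<And>i. i < k \<Longrightarrow> a * (i + 2) + a' \<le> A \<and> b * (i + 2) + b' \<le> B \<and> r * (i + 2) + r' \<le> R"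
  shows "edgeF k c d L M N \<in> PQ A B R"
proof -
  have eq: "edgeF k c d L M N = (\<lambda>x. \<Sum>j\<le>k. \<Sum>i<j. (- d * (c j / real (Suc j))) * (((L x * M x) * N x) * M x ^ i))"
    by (rule ext) (simp add: edgeF_def sum_distrib_left sum_divide_distrib mult_ac)
  show ?thesis unfolding eq
  proof (intro polyS_sum finite_atMost finite_lessThan polyS_scale)
    fix j i assume j: "j \<in> {..k}" and i: "i \<in> {..<j}"
    have "(\<lambda>x. ((L x * M x) * N x) * M x ^ i) \<in> PQ (a + a + a' + i * a) (b + b + b' + i * b) (r + r + r' + i * r)"
      by (intro PQ_mult PQ_power L M N)
    moreover have "i < k" using i j by auto
    ultimately show "(\<lambda>x. ((L x * M x) * N x) * M x ^ i) \<in> PQ A B R"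
      using ar[of i] by (elim PQ_mono) (simp_all add: algebra_simps)
  qed
qed



lemma edge_apply:
  assumes diff: "\<And>x. \<phi> differentiable (at x)"
    and pc: "\<And>x. poincare u x = G x *\<^sub>R perp x"
    and Gline: "\<And>t. G (p + t *\<^sub>R (q - p)) = (\<Sum>j\<le>k. a j * t ^ j)"
    and philine: "\<And>s. \<phi> (p + s *\<^sub>R (q - p)) = (perp p \<bullet> (q - p)) * (\<Sum>j\<le>k. a j / real (Suc j) * (s ^ Suc j - s))"
  shows "tangential_const_on_edge (\<lambda>x. poincare u x - grad \<phi> x) p q"
  by (rule core[where Cc = "- (perp p \<bullet> (q - p)) * (\<Sum>j\<le>k. a j / real (Suc j))", OF diff philine _ refl pc])
     (simp only: Gline hderiv)

definition det2 :: "real \<times> real \<Rightarrow> real \<times> real \<Rightarrow> real" where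
  "det2 v w = fst v * snd w - snd v * fst w"

lemma noncol:
  assumes "\<not> collinear {x, y, z}"
  shows "det2 (x - y) (z - y) \<noteq> 0"
proof
  assume d: "det2 (x - y) (z - y) = 0"
  define w where "w = x - y"
  define w' where "w' = z - y"
  have "w = 0 \<or> w' = 0 \<or> (\<exists>c. w' = c *\<^sub>R w)"
  proof (cases "fst w = 0")
    case True
    show ?thesis
    proof (cases "snd w = 0")
      case True
      with \<open>fst w = 0\<close> have "w = 0" by (simp add: prod_eq_iff)
      thus ?thesis by simp
    next
      case False
      from d True False have "fst w' = 0" by (simp add: det2_def w_def w'_def)
      hence "w' = (snd w' / snd w) *\<^sub>R w" using True False by (simp add: prod_eq_iff)
      thus ?thesis by blast
    qed
  next
    case False
    from d have "fst w * snd w' = snd w * fst w'" by (simp add: det2_def w_def w'_def)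
    hence "w' = (fst w' / fst w) *\<^sub>R w" using False by (simp add: prod_eq_iff field_simps)
    thus ?thesis by blast
  qed
  hence "collinear {0, x - y, z - y}" unfolding collinear_lemma w_def w'_def .
  moreover have "collinear {x, y, z} \<longleftrightarrow> collinear {0, x - y, z - y}"
    by (auto simp: collinear_def)
  ultimately show False using assms by simp
qed



definition Lt :: "real \<times> real \<Rightarrow> real \<times> real \<Rightarrow> real \<times> real \<Rightarrow> real \<times> real \<Rightarrow> real" where
  "Lt p q r x = det2 (x - r) (q - r) / det2 (p - r) (q - r)"
definition Mt :: "real \<times> real \<Rightarrow> real \<times> real \<Rightarrow> real \<times> real \<Rightarrow> real \<times> real \<Rightarrow> real" where
  "Mt p q r x = det2 (x - r) (p - r) / det2 (q - r) (p - r)"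

lemma affine_mem: "(\<lambda>x. c * (\<alpha> * fst x + \<beta> * snd x + \<gamma>)) \<in> PQ 1 1 1"
proof -
  have "(\<lambda>x. \<alpha> * fst x) \<in> PQ 1 1 1" by (rule polyS_scale, rule PQ_mono[OF PQ_fst]) auto
  moreover have "(\<lambda>x. \<beta> * snd x) \<in> PQ 1 1 1" by (rule polyS_scale, rule PQ_mono[OF PQ_snd]) auto
  ultimately have "(\<lambda>x. \<alpha> * fst x + \<beta> * snd x + \<gamma>) \<in> PQ 1 1 1"
    by (intro polyS_add PQ_const)
  thus ?thesis by (rule polyS_scale)
qed

lemma det_mem: "(\<lambda>x. det2 (x - r) w / D) \<in> PQ 1 1 1"
proof -
  have eq: "(\<lambda>x. det2 (x - r) w / D) = (\<lambda>x. (1/D) * (snd w * fst x + (- fst w) * snd x + (snd r * fst w - fst r * snd w)))"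
    by (rule ext) (simp add: det2_def divide_inverse algebra_simps)
  show ?thesis unfolding eq by (rule affine_mem)
qed

lemma Lt_mem: "Lt p q r \<in> PQ 1 1 1" unfolding Lt_def[abs_def] by (rule det_mem)
lemma Mt_mem: "Mt p q r \<in> PQ 1 1 1" unfolding Mt_def[abs_def] by (rule det_mem)

lemma tri_line:
  assumes "det2 (p - r) (q - r) \<noteq> 0"
  shows "Lt p q r (p + s *\<^sub>R (q - p)) = 1 - s" "Mt p q r (p + s *\<^sub>R (q - p)) = s"
proof -
  have e: "det2 (q - r) (p - r) = - det2 (p - r) (q - r)" by (simp add: det2_def)
  show "Lt p q r (p + s *\<^sub>R (q - p)) = 1 - s" using assms unfolding Lt_def
    by (simp add: det2_def field_simps; simp add: algebra_simps)
  show "Mt p q r (p + s *\<^sub>R (q - p)) = s" using assms unfolding Mt_def e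
    by (simp add: det2_def field_simps; simp add: algebra_simps)
qed

lemma tri_zero1: "Lt p q r (q + s *\<^sub>R (r - q)) = 0"
  unfolding Lt_def by (simp add: det2_def algebra_simps)
lemma tri_zero2: "Mt p q r (r + s *\<^sub>R (p - r)) = 0"
  unfolding Mt_def by (simp add: det2_def algebra_simps)

abbreviation ET where "ET k a p q r \<equiv> edgeF k a (perp p \<bullet> (q - p)) (Lt p q r) (Mt p q r) (\<lambda>_. 1)"

lemma ET_line: "det2 (p - r) (q - r) \<noteq> 0 \<Longrightarrow>
   ET k a p q r (p + s *\<^sub>R (q - p)) = perp p \<bullet> (q - p) * (\<Sum>j\<le>k. a j / real (Suc j) * (s ^ Suc j - s))"
  by (rule edgeF_line) (simp_all add: tri_line)

lemma ET_zero1: "ET k a p q r (q + s *\<^sub>R (r - q)) = 0"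
  by (rule edgeF_zero) (simp add: tri_zero1)
lemma ET_zero2: "ET k a p q r (r + s *\<^sub>R (p - r)) = 0"
  by (rule edgeF_zero) (simp add: tri_zero2)

lemma ET_mem: "ET k a p q r \<in> PQ (Suc k) (Suc k) (Suc k)"
  by (rule edgeF_mem[OF Lt_mem Mt_mem PQ_const[of 1 0 0 0]]) auto

lemma triangle_part:
  assumes nc: "\<not> collinear {a, b, c}" and u: "u \<in> polyP k"
  shows "\<exists>\<phi>\<in>polyP (Suc k). \<forall>(p, q)\<in>{(a, b), (b, c), (c, a)}.
                  tangential_const_on_edge (\<lambda>x. poincare u x - grad \<phi> x) p q"
proof -
  have uS: "u \<in> PQ k k k" using u polyP_eq by simp
  obtain G where G: "G \<in> PQ k k k" and pc: "\<And>x. poincare u x = G x *\<^sub>R perp x"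
    using poincare_poly[OF uS finite_idx] by blast
  have degc: "\<And>s. s \<in> idx k k k \<Longrightarrow> (if fst v = 0 then 0 else fst s) + (if snd v = 0 then 0 else snd s) \<le> k" for v :: "real \<times> real"
    by (auto simp: idx_def)
  obtain a1 where a1: "\<And>t. G (a + t *\<^sub>R (b - a)) = (\<Sum>j\<le>k. a1 j * t ^ j)"
    using restrict_line[OF G finite_idx degc] by blast
  obtain a2 where a2: "\<And>t. G (b + t *\<^sub>R (c - b)) = (\<Sum>j\<le>k. a2 j * t ^ j)"
    using restrict_line[OF G finite_idx degc] by blast
  obtain a3 where a3: "\<And>t. G (c + t *\<^sub>R (a - c)) = (\<Sum>j\<le>k. a3 j * t ^ j)"
    using restrict_line[OF G finite_idx degc] by blast
  have n1: "det2 (a - c) (b - c) \<noteq> 0" by (rule noncol) (use nc in \<open>simp add: insert_commute\<close>)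
  have n2: "det2 (b - a) (c - a) \<noteq> 0" by (rule noncol) (use nc in \<open>simp add: insert_commute\<close>)
  have n3: "det2 (c - b) (a - b) \<noteq> 0" by (rule noncol) (use nc in \<open>simp add: insert_commute\<close>)
  define \<phi> where "\<phi> x = ET k a1 a b c x + ET k a2 b c a x + ET k a3 c a b x" for x
  have mem: "\<phi> \<in> PQ (Suc k) (Suc k) (Suc k)" unfolding \<phi>_def[abs_def]
    by (intro polyS_add ET_mem)
  hence memP: "\<phi> \<in> polyP (Suc k)" using polyP_eq by simp
  have diff: "\<And>x. \<phi> differentiable (at x)" using polyS_differentiable[OF mem finite_idx] .
  have e1: "tangential_const_on_edge (\<lambda>x. poincare u x - grad \<phi> x) a b"
    by (rule edge_apply[OF diff pc a1]) (simp add: \<phi>_def ET_line[OF n1] ET_zero1 ET_zero2)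
  have e2: "tangential_const_on_edge (\<lambda>x. poincare u x - grad \<phi> x) b c"
    by (rule edge_apply[OF diff pc a2]) (simp add: \<phi>_def ET_line[OF n2] ET_zero1 ET_zero2)
  have e3: "tangential_const_on_edge (\<lambda>x. poincare u x - grad \<phi> x) c a"
    by (rule edge_apply[OF diff pc a3]) (simp add: \<phi>_def ET_line[OF n3] ET_zero1 ET_zero2)
  show ?thesis using memP e1 e2 e3 by blast
qed



definition fx :: "real \<Rightarrow> real \<Rightarrow> real \<times> real \<Rightarrow> real" where "fx \<alpha> \<gamma> x = \<alpha> * fst x + \<gamma>"
definition fy :: "real \<Rightarrow> real \<Rightarrow> real \<times> real \<Rightarrow> real" where "fy \<beta> \<gamma> x = \<beta> * snd x + \<gamma>"

lemma fx_mem: "fx \<alpha> \<gamma> \<in> PQ 1 0 1"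
proof -
  have "(\<lambda>x. \<alpha> * fst x + \<gamma>) \<in> PQ 1 0 1"
    by (intro polyS_add polyS_scale PQ_const) (rule PQ_fst[unfolded fst_def[symmetric]])
  thus ?thesis unfolding fx_def[abs_def] .
qed

lemma fy_mem: "fy \<beta> \<gamma> \<in> PQ 0 1 1"
proof -
  have "(\<lambda>x. \<beta> * snd x + \<gamma>) \<in> PQ 0 1 1"
    by (intro polyS_add polyS_scale PQ_const) (rule PQ_snd)
  thus ?thesis unfolding fy_def[abs_def] .
qed

lemma lin_eq: "h \<noteq> (0::real) \<Longrightarrow> a * z + c = w * h \<Longrightarrow> (a / h) * z + c / h = w"
  by (simp add: field_simps)

abbreviation ER where "ER k a p q L M N \<equiv> edgeF k a (perp p \<bullet> (q - p)) L M N"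

lemma ER_line: "L x = 1 - s \<Longrightarrow> M x = s \<Longrightarrow> N x = 1 \<Longrightarrow> x = p + s *\<^sub>R (q - p) \<Longrightarrow>
   ER k a p q L M N (p + s *\<^sub>R (q - p)) = perp p \<bullet> (q - p) * (\<Sum>j\<le>k. a j / real (Suc j) * (s ^ Suc j - s))"
  by (rule edgeF_line) simp_all

lemma rect_part:
  assumes xx: "x0 < x1" and yy: "y0 < y1" and u: "u \<in> polyQ k"
  shows "\<exists>\<phi>\<in>polyQ (Suc k).
               \<forall>(p, q)\<in>{((x0, y0), (x1, y0)), ((x1, y0), (x1, y1)),
                         ((x1, y1), (x0, y1)), ((x0, y1), (x0, y0))}.
                  tangential_const_on_edge (\<lambda>x. poincare u x - grad \<phi> x) p q"
proof -
  have hx: "x1 - x0 \<noteq> 0" and hy: "y1 - y0 \<noteq> 0" using xx yy by auto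
  have uS: "u \<in> PQ k k (2*k)" using u polyQ_eq by simp
  obtain G where G: "G \<in> PQ k k (2*k)" and pc: "\<And>x. poincare u x = G x *\<^sub>R perp x"
    using poincare_poly[OF uS finite_idx] by blast
  have "\<exists>a. \<forall>t. G ((x0, y0) + t *\<^sub>R ((x1, y0) - (x0, y0))) = (\<Sum>j\<le>k. a j * t ^ j)"
    by (rule restrict_line[OF G finite_idx]) (auto simp: idx_def)
  then obtain a1 where a1: "\<And>t. G ((x0, y0) + t *\<^sub>R ((x1, y0) - (x0, y0))) = (\<Sum>j\<le>k. a1 j * t ^ j)" by blast
  have "\<exists>a. \<forall>t. G ((x1, y0) + t *\<^sub>R ((x1, y1) - (x1, y0))) = (\<Sum>j\<le>k. a j * t ^ j)"
    by (rule restrict_line[OF G finite_idx]) (auto simp: idx_def)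
  then obtain a2 where a2: "\<And>t. G ((x1, y0) + t *\<^sub>R ((x1, y1) - (x1, y0))) = (\<Sum>j\<le>k. a2 j * t ^ j)" by blast
  have "\<exists>a. \<forall>t. G ((x1, y1) + t *\<^sub>R ((x0, y1) - (x1, y1))) = (\<Sum>j\<le>k. a j * t ^ j)"
    by (rule restrict_line[OF G finite_idx]) (auto simp: idx_def)
  then obtain a3 where a3: "\<And>t. G ((x1, y1) + t *\<^sub>R ((x0, y1) - (x1, y1))) = (\<Sum>j\<le>k. a3 j * t ^ j)" by blast
  have "\<exists>a. \<forall>t. G ((x0, y1) + t *\<^sub>R ((x0, y0) - (x0, y1))) = (\<Sum>j\<le>k. a j * t ^ j)"
    by (rule restrict_line[OF G finite_idx]) (auto simp: idx_def)
  then obtain a4 where a4: "\<And>t. G ((x0, y1) + t *\<^sub>R ((x0, y0) - (x0, y1))) = (\<Sum>j\<le>k. a4 j * t ^ j)" by blast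
  define X0 where "X0 = fx (- 1 / (x1 - x0)) (x1 / (x1 - x0))"
  define X1 where "X1 = fx (1 / (x1 - x0)) (- x0 / (x1 - x0))"
  define Y0 where "Y0 = fy (- 1 / (y1 - y0)) (y1 / (y1 - y0))"
  define Y1 where "Y1 = fy (1 / (y1 - y0)) (- y0 / (y1 - y0))"
  have X0a: "X0 (x0 + s * (x1 - x0), y) = 1 - s" for s y
    unfolding X0_def fx_def by (rule lin_eq[OF hx]) (simp add: algebra_simps)
  have X1a: "X1 (x0 + s * (x1 - x0), y) = s" for s y
    unfolding X1_def fx_def by (rule lin_eq[OF hx]) (simp add: algebra_simps)
  have X0b: "X0 (x1 + s * (x0 - x1), y) = s" for s y
    unfolding X0_def fx_def by (rule lin_eq[OF hx]) (simp add: algebra_simps)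
  have X1b: "X1 (x1 + s * (x0 - x1), y) = 1 - s" for s y
    unfolding X1_def fx_def by (rule lin_eq[OF hx]) (simp add: algebra_simps)
  have Y0a: "Y0 (x, y0 + s * (y1 - y0)) = 1 - s" for s x
    unfolding Y0_def fy_def by (rule lin_eq[OF hy]) (simp add: algebra_simps)
  have Y1a: "Y1 (x, y0 + s * (y1 - y0)) = s" for s x
    unfolding Y1_def fy_def by (rule lin_eq[OF hy]) (simp add: algebra_simps)
  have Y0b: "Y0 (x, y1 + s * (y0 - y1)) = s" for s x
    unfolding Y0_def fy_def by (rule lin_eq[OF hy]) (simp add: algebra_simps)
  have Y1b: "Y1 (x, y1 + s * (y0 - y1)) = 1 - s" for s x
    unfolding Y1_def fy_def by (rule lin_eq[OF hy]) (simp add: algebra_simps)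
  have X0c: "X0 (x1, y) = 0" and X1c: "X1 (x0, y) = 0" and X0d: "X0 (x0, y) = 1" and X1d: "X1 (x1, y) = 1" for y
    unfolding X0_def X1_def fx_def by (rule lin_eq[OF hx], simp)+
  have Y0c: "Y0 (x, y1) = 0" and Y1c: "Y1 (x, y0) = 0" and Y0d: "Y0 (x, y0) = 1" and Y1d: "Y1 (x, y1) = 1" for x
    unfolding Y0_def Y1_def fy_def by (rule lin_eq[OF hy], simp)+
  define E1 where "E1 = ER k a1 (x0, y0) (x1, y0) X0 X1 Y0"
  define E2 where "E2 = ER k a2 (x1, y0) (x1, y1) Y0 Y1 X1"
  define E3 where "E3 = ER k a3 (x1, y1) (x0, y1) X1 X0 Y1"
  define E4 where "E4 = ER k a4 (x0, y1) (x0, y0) Y1 Y0 X0"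
  define \<phi> where "\<phi> x = E1 x + E2 x + E3 x + E4 x" for x
  have memH: "edgeF k a d X0 X1 Y0 \<in> PQ (Suc k) (Suc k) (2 * Suc k)"
     "edgeF k a d X1 X0 Y1 \<in> PQ (Suc k) (Suc k) (2 * Suc k)" for a d
    unfolding X0_def X1_def Y0_def Y1_def by (rule edgeF_mem[OF fx_mem fx_mem fy_mem]; auto)+
  have memV: "edgeF k a d Y0 Y1 X1 \<in> PQ (Suc k) (Suc k) (2 * Suc k)"
     "edgeF k a d Y1 Y0 X0 \<in> PQ (Suc k) (Suc k) (2 * Suc k)" for a d
    unfolding X0_def X1_def Y0_def Y1_def by (rule edgeF_mem[OF fy_mem fy_mem fx_mem]; auto)+
  have mem: "\<phi> \<in> PQ (Suc k) (Suc k) (2 * Suc k)" unfolding \<phi>_def[abs_def] E1_def E2_def E3_def E4_def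
    by (intro polyS_add memH memV)
  hence memQ: "\<phi> \<in> polyQ (Suc k)" using polyQ_eq by simp
  have diff: "\<And>x. \<phi> differentiable (at x)" using polyS_differentiable[OF mem finite_idx] .
  have e1: "tangential_const_on_edge (\<lambda>x. poincare u x - grad \<phi> x) (x0, y0) (x1, y0)"
  proof (rule edge_apply[OF diff pc a1])
    fix s
    have "E1 ((x0, y0) + s *\<^sub>R ((x1, y0) - (x0, y0))) = perp (x0, y0) \<bullet> ((x1, y0) - (x0, y0)) * (\<Sum>j\<le>k. a1 j / real (Suc j) * (s ^ Suc j - s))"
      unfolding E1_def by (rule edgeF_line) (simp_all add: X0a X1a Y0d)
    moreover have "E2 ((x0, y0) + s *\<^sub>R ((x1, y0) - (x0, y0))) = 0"
      unfolding E2_def by (rule edgeF_zero) (simp add: Y1c)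
    moreover have "E3 ((x0, y0) + s *\<^sub>R ((x1, y0) - (x0, y0))) = 0"
      unfolding E3_def by (rule edgeF_zero) (simp add: Y1c)
    moreover have "E4 ((x0, y0) + s *\<^sub>R ((x1, y0) - (x0, y0))) = 0"
      unfolding E4_def by (rule edgeF_zero) (simp add: Y1c)
    ultimately show "\<phi> ((x0, y0) + s *\<^sub>R ((x1, y0) - (x0, y0))) = perp (x0, y0) \<bullet> ((x1, y0) - (x0, y0)) * (\<Sum>j\<le>k. a1 j / real (Suc j) * (s ^ Suc j - s))"
      by (simp add: \<phi>_def)
  qed
  have e2: "tangential_const_on_edge (\<lambda>x. poincare u x - grad \<phi> x) (x1, y0) (x1, y1)"
  proof (rule edge_apply[OF diff pc a2])
    fix s
    have "E2 ((x1, y0) + s *\<^sub>R ((x1, y1) - (x1, y0))) = perp (x1, y0) \<bullet> ((x1, y1) - (x1, y0)) * (\<Sum>j\<le>k. a2 j / real (Suc j) * (s ^ Suc j - s))"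
      unfolding E2_def by (rule edgeF_line) (simp_all add: Y0a Y1a X1d)
    moreover have "E1 ((x1, y0) + s *\<^sub>R ((x1, y1) - (x1, y0))) = 0"
      unfolding E1_def by (rule edgeF_zero) (simp add: X0c)
    moreover have "E3 ((x1, y0) + s *\<^sub>R ((x1, y1) - (x1, y0))) = 0"
      unfolding E3_def by (rule edgeF_zero) (simp add: X0c)
    moreover have "E4 ((x1, y0) + s *\<^sub>R ((x1, y1) - (x1, y0))) = 0"
      unfolding E4_def by (rule edgeF_zero) (simp add: X0c)
    ultimately show "\<phi> ((x1, y0) + s *\<^sub>R ((x1, y1) - (x1, y0))) = perp (x1, y0) \<bullet> ((x1, y1) - (x1, y0)) * (\<Sum>j\<le>k. a2 j / real (Suc j) * (s ^ Suc j - s))"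
      by (simp add: \<phi>_def)
  qed
  have e3: "tangential_const_on_edge (\<lambda>x. poincare u x - grad \<phi> x) (x1, y1) (x0, y1)"
  proof (rule edge_apply[OF diff pc a3])
    fix s
    have "E3 ((x1, y1) + s *\<^sub>R ((x0, y1) - (x1, y1))) = perp (x1, y1) \<bullet> ((x0, y1) - (x1, y1)) * (\<Sum>j\<le>k. a3 j / real (Suc j) * (s ^ Suc j - s))"
      unfolding E3_def by (rule edgeF_line) (simp_all add: X0b X1b Y1d)
    moreover have "E1 ((x1, y1) + s *\<^sub>R ((x0, y1) - (x1, y1))) = 0"
      unfolding E1_def by (rule edgeF_zero) (simp add: Y0c)
    moreover have "E2 ((x1, y1) + s *\<^sub>R ((x0, y1) - (x1, y1))) = 0"
      unfolding E2_def by (rule edgeF_zero) (simp add: Y0c)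
    moreover have "E4 ((x1, y1) + s *\<^sub>R ((x0, y1) - (x1, y1))) = 0"
      unfolding E4_def by (rule edgeF_zero) (simp add: Y0c)
    ultimately show "\<phi> ((x1, y1) + s *\<^sub>R ((x0, y1) - (x1, y1))) = perp (x1, y1) \<bullet> ((x0, y1) - (x1, y1)) * (\<Sum>j\<le>k. a3 j / real (Suc j) * (s ^ Suc j - s))"
      by (simp add: \<phi>_def)
  qed
  have e4: "tangential_const_on_edge (\<lambda>x. poincare u x - grad \<phi> x) (x0, y1) (x0, y0)"
  proof (rule edge_apply[OF diff pc a4])
    fix s
    have "E4 ((x0, y1) + s *\<^sub>R ((x0, y0) - (x0, y1))) = perp (x0, y1) \<bullet> ((x0, y0) - (x0, y1)) * (\<Sum>j\<le>k. a4 j / real (Suc j) * (s ^ Suc j - s))"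
      unfolding E4_def by (rule edgeF_line) (simp_all add: Y0b Y1b X0d)
    moreover have "E1 ((x0, y1) + s *\<^sub>R ((x0, y0) - (x0, y1))) = 0"
      unfolding E1_def by (rule edgeF_zero) (simp add: X1c)
    moreover have "E2 ((x0, y1) + s *\<^sub>R ((x0, y0) - (x0, y1))) = 0"
      unfolding E2_def by (rule edgeF_zero) (simp add: X1c)
    moreover have "E3 ((x0, y1) + s *\<^sub>R ((x0, y0) - (x0, y1))) = 0"
      unfolding E3_def by (rule edgeF_zero) (simp add: X1c)
    ultimately show "\<phi> ((x0, y1) + s *\<^sub>R ((x0, y0) - (x0, y1))) = perp (x0, y1) \<bullet> ((x0, y0) - (x0, y1)) * (\<Sum>j\<le>k. a4 j / real (Suc j) * (s ^ Suc j - s))"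
      by (simp add: \<phi>_def)
  qed
  show ?thesis using memQ e1 e2 e3 e4 by blast
qed


theorem mainTheorem1:
  fixes k :: nat
  assumes "k \<ge> 1"
  shows "(\<forall>a b c u. \<not> collinear {a, b, c} \<and> u \<in> polyP k \<longrightarrow>
            (\<exists>\<phi>\<in>polyP (Suc k).
               \<forall>(p, q)\<in>{(a, b), (b, c), (c, a)}.
                  tangential_const_on_edge (\<lambda>x. poincare u x - grad \<phi> x) p q))
       \<and> (\<forall>x0 x1 y0 y1 u. x0 < x1 \<and> y0 < y1 \<and> u \<in> polyQ k \<longrightarrow>
            (\<exists>\<phi>\<in>polyQ (Suc k).
               \<forall>(p, q)\<in>{((x0, y0), (x1, y0)), ((x1, y0), (x1, y1)),
                         ((x1, y1), (x0, y1)), ((x0, y1), (x0, y0))}.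
                  tangential_const_on_edge (\<lambda>x. poincare u x - grad \<phi> x) p q))"
  using triangle_part rect_part by blast

end
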